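(* Let $\mathcal H$ be a complex Hilbert space and let $\mathbf A=(A_1,\dots,A_m)$ be an $m$-tuple of bounded self-adjoint operators on $\mathcal H$. If $\Lambda_{\hat k}(\mathbf A)\neq\emptyset$ for some integer $\hat k>(m+1)/2$, then $\Lambda_1(\mathbf A)$ is star-shaped and contains $\operatorname{conv}\Lambda_{\hat k}(\mathbf A)$, and every element of $\operatorname{conv}\Lambda_{\hat k}(\mathbf A)$ is a star center of $\Lambda_1(\mathbf A)$.
   Context: For an $m$-tuple $\mathbf A=(A_1,\dots,A_m)$ of bounded self-adjoint operators on a complex Hilbert space $\mathcal H$ and a positive integer $k$, $\Lambda_k(\mathbf A)=\{(a_1,\dots,a_m)\in\mathbb R^m:$ there is an orthogonal projection $P$ of rank $k$ on $\mathcal H$ with $PA_jP=a_jP$ for $j=1,\dots,m\}$; $\Lambda_1(\mathbf A)=\{(\langle A_1x,x\rangle,\dots,\langle A_mx,x\rangle):\|x\|=1\}$ is the joint numerical range. A set $S\subseteq\mathbb R^m$ is star-shaped with star center $\mathbf c\in S$ if for every $\mathbf b\in S$ the segment joining $\mathbf c$ and $\mathbf b$ lies in $S$. $\operatorname{conv}$ denotes convex hull. *)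

theory Defs
  imports "HOL-Analysis.Analysis"
begin

class complex_vector = real_vector +
  fixes scaleC :: "complex \<Rightarrow> 'a \<Rightarrow> 'a" (infixr \<open>*\<^sub>C\<close> 75)
  assumes scaleC_add_right: "a *\<^sub>C (x + y) = a *\<^sub>C x + a *\<^sub>C y"
    and scaleC_add_left: "(a + b) *\<^sub>C x = a *\<^sub>C x + b *\<^sub>C x"
    and scaleC_scaleC: "a *\<^sub>C (b *\<^sub>C x) = (a * b) *\<^sub>C x"
    and scaleC_one: "1 *\<^sub>C x = x"
    and scaleR_scaleC: "r *\<^sub>R x = (complex_of_real r) *\<^sub>C x"

text \<open>Inner product: conjugate-linear in the first, linear in the second argument;
  the norm is the one induced by the inner product.\<close>
class complex_inner = complex_vector + real_normed_vector +
  fixes cinner :: "'a \<Rightarrow> 'a \<Rightarrow> complex"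
  assumes cinner_commute: "cinner x y = cnj (cinner y x)"
    and cinner_add_right: "cinner x (y + z) = cinner x y + cinner x z"
    and cinner_scaleC_right: "cinner x (c *\<^sub>C y) = c * cinner x y"
    and cinner_ge_zero: "0 \<le> Re (cinner x x)"
    and cinner_eq_zero_iff: "cinner x x = 0 \<longleftrightarrow> x = 0"
    and norm_eq_sqrt_cinner: "norm x = sqrt (Re (cinner x x))"

class chilbert_space = complex_inner + complete_space

definition bounded_clinear :: "('a::complex_inner \<Rightarrow> 'b::complex_inner) \<Rightarrow> bool" where
  "bounded_clinear f \<longleftrightarrow>
     (\<forall>x y. f (x + y) = f x + f y) \<and> (\<forall>c x. f (c *\<^sub>C x) = c *\<^sub>C f x) \<and>
     (\<exists>K. \<forall>x. norm (f x) \<le> norm x * K)"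

definition selfadjoint :: "('a::complex_inner \<Rightarrow> 'a) \<Rightarrow> bool" where
  "selfadjoint A \<longleftrightarrow> (\<forall>x y. cinner (A x) y = cinner x (A y))"

definition orth_proj :: "('a::complex_inner \<Rightarrow> 'a) \<Rightarrow> bool" where
  "orth_proj P \<longleftrightarrow> bounded_clinear P \<and> selfadjoint P \<and> P \<circ> P = P"

definition has_rank :: "('a::complex_inner \<Rightarrow> 'a) \<Rightarrow> nat \<Rightarrow> bool" where
  "has_rank P k \<longleftrightarrow> (\<exists>B. finite B \<and> card B = k \<and> B \<subseteq> range P \<and>
       \<not> module.dependent scaleC B \<and> module.span scaleC B = range P)"

definition rank_k_nr ::
  "nat \<Rightarrow> ('m::finite \<Rightarrow> 'a::complex_inner \<Rightarrow> 'a) \<Rightarrow> (real ^ 'm) set" where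
  "rank_k_nr k A = {a. \<exists>P. orth_proj P \<and> has_rank P k \<and>
       (\<forall>j. (\<lambda>x. P (A j (P x))) = (\<lambda>x. complex_of_real (a $ j) *\<^sub>C P x))}"

definition star_center :: "'v::real_vector \<Rightarrow> 'v set \<Rightarrow> bool" where
  "star_center c S \<longleftrightarrow> c \<in> S \<and> (\<forall>b\<in>S. closed_segment c b \<subseteq> S)"

definition star_shaped :: "'v::real_vector set \<Rightarrow> bool" where
  "star_shaped S \<longleftrightarrow> (\<exists>c. star_center c S)"

end

theory Submission
  imports Defs
begin

lemma module_scaleC: "module (scaleC :: complex \<Rightarrow> 'a::complex_vector \<Rightarrow> 'a)"
  by unfold_locales (auto simp: scaleC_add_right scaleC_add_left scaleC_scaleC scaleC_one)

lemma scaleC_zero_right [simp]: "a *\<^sub>C (0::'a::complex_vector) = 0"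
  using module.scale_zero_right[OF module_scaleC] by blast

lemma scaleC_zero_left [simp]: "0 *\<^sub>C (x::'a::complex_vector) = 0"
  using module.scale_zero_left[OF module_scaleC] by blast

lemma cinner_scaleC_left: "cinner (c *\<^sub>C x) y = cnj c * cinner (x::'a::complex_inner) y"
  by (metis cinner_commute cinner_scaleC_right complex_cnj_cnj complex_cnj_mult)

lemma cinner_add_left: "cinner (x + y) z = cinner x z + cinner (y::'a::complex_inner) z"
  by (metis cinner_commute cinner_add_right complex_cnj_add)

lemma cinner_zero_right [simp]: "cinner x (0::'a::complex_inner) = 0"
  by (metis add_cancel_right_right cinner_add_right add_0)

lemma cinner_zero_left [simp]: "cinner (0::'a::complex_inner) x = 0"
  by (metis cinner_commute cinner_zero_right complex_cnj_zero)

lemma cinner_self_real: "cinner x x = complex_of_real ((norm (x::'a::complex_inner))^2)"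
proof -
  have "Im (cinner x x) = 0" by (metis cinner_commute cnj.sel(2) neg_equal_zero)
  moreover have "Re (cinner x x) = (norm x)^2"
    using norm_eq_sqrt_cinner[of x] cinner_ge_zero[of x] by simp
  ultimately show ?thesis by (simp add: complex_eq_iff)
qed

lemma cinner_diff_right: "cinner x (y - z) = cinner x y - cinner (x::'a::complex_inner) z"
  by (metis cinner_add_right diff_add_cancel eq_diff_eq)

lemma cinner_diff_left: "cinner (x - y) z = cinner x z - cinner (y::'a::complex_inner) z"
  by (metis cinner_add_left diff_add_cancel eq_diff_eq)

lemma norm_scaleC: "norm (c *\<^sub>C x) = cmod c * norm (x::'a::complex_inner)"
proof -
  have "complex_of_real ((norm (c *\<^sub>C x))^2) = complex_of_real ((cmod c * norm x)^2)"
  proof -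
    have cc: "cnj c * c = complex_of_real ((cmod c)^2)" using complex_norm_square[of c] by (simp add: mult.commute)
    have "cinner (c *\<^sub>C x) (c *\<^sub>C x) = (cnj c * c) * cinner x x"
      by (simp add: cinner_scaleC_left cinner_scaleC_right mult.assoc)
    also have "\<dots> = complex_of_real ((cmod c)^2) * complex_of_real ((norm x)^2)"
      by (simp only: cc cinner_self_real)
    finally show ?thesis by (metis cinner_self_real of_real_mult power_mult_distrib)
  qed
  then have "(norm (c *\<^sub>C x))^2 = (cmod c * norm x)^2" using of_real_eq_iff by blast
  then show ?thesis by (simp add: power2_eq_iff_nonneg)
qed

lemma cs_unit:
  assumes "norm (z::'a::complex_inner) = 1"
  shows "cmod (cinner z v) \<le> norm v"
proof -
  define a where "a = cinner z v"
  define w where "w = v - a *\<^sub>C z"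
  have zz: "cinner z z = 1" using assms cinner_self_real[of z] by simp
  have vz: "cinner v z = cnj a" unfolding a_def by (rule cinner_commute)
  have "cinner w w = cinner v v - (a * cnj a + cnj a * a) + cnj a * a * cinner z z"
    unfolding w_def cinner_diff_left cinner_diff_right cinner_scaleC_left cinner_scaleC_right vz a_def[symmetric]
    by (simp add: right_diff_distrib left_diff_distrib mult.commute mult.left_commute)
  then have ww: "cinner w w = cinner v v - a * cnj a" by (simp add: zz algebra_simps)
  have aa: "a * cnj a = complex_of_real ((cmod a)^2)" using complex_norm_square[of a] by simp
  have "Re (cinner w w) = (norm v)^2 - (cmod a)^2"
    unfolding ww aa using cinner_self_real[of v] by simp
  then have "(cmod a)^2 \<le> (norm v)^2" using cinner_ge_zero[of w] by linarith
  then show ?thesis unfolding a_def using power2_le_imp_le norm_ge_zero by blast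
qed

lemma bcl_scale: "bounded_clinear f \<Longrightarrow> f (c *\<^sub>C x) = c *\<^sub>C f x"
  unfolding bounded_clinear_def by blast

lemma bcl_add: "bounded_clinear f \<Longrightarrow> f (x + y) = f x + f y"
  unfolding bounded_clinear_def by blast

lemma selfadj_real: "selfadjoint B \<Longrightarrow> cinner z (B z) = complex_of_real (Re (cinner z (B z)))"
proof -
  assume "selfadjoint B"
  then have "cinner z (B z) = cnj (cinner z (B z))"
    unfolding selfadjoint_def by (metis cinner_commute)
  then have "Im (cinner z (B z)) = 0" by (metis cnj.sel(2) neg_equal_zero)
  then show ?thesis by (simp add: complex_eq_iff)
qed

lemma scaleC_cancel_nonzero:
  assumes "c *\<^sub>C (x::'a::complex_vector) = 0" "c \<noteq> 0"
  shows "x = 0"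
proof -
  have "x = (inverse c * c) *\<^sub>C x" using assms(2) by (simp add: scaleC_one)
  also have "\<dots> = inverse c *\<^sub>C (c *\<^sub>C x)" by (simp add: scaleC_scaleC)
  finally show ?thesis using assms(1) by simp
qed

lemma in_nr1:
  fixes A :: "'m::finite \<Rightarrow> 'a::complex_inner \<Rightarrow> 'a"
  assumes z: "norm z = 1" and A: "\<forall>j. bounded_clinear (A j) \<and> selfadjoint (A j)"
  shows "(\<chi> j. Re (cinner z (A j z))) \<in> rank_k_nr 1 A"
proof -
  define Q where "Q = (\<lambda>v. cinner z v *\<^sub>C z)"
  have zz: "cinner z z = 1" using z cinner_self_real[of z] by simp
  have Qz: "Q (k *\<^sub>C z) = k *\<^sub>C z" for k
    unfolding Q_def by (simp add: cinner_scaleC_right zz)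
  have bcl: "bounded_clinear Q"
    unfolding bounded_clinear_def
  proof (intro conjI allI exI)
    fix x y show "Q (x + y) = Q x + Q y" unfolding Q_def by (simp add: cinner_add_right scaleC_add_left)
  next
    fix c x show "Q (c *\<^sub>C x) = c *\<^sub>C Q x" unfolding Q_def by (simp add: cinner_scaleC_right scaleC_scaleC)
  next
    fix x show "norm (Q x) \<le> norm x * 1" unfolding Q_def using cs_unit[OF z, of x] by (simp add: norm_scaleC z)
  qed
  have sa: "selfadjoint Q"
    unfolding selfadjoint_def Q_def cinner_scaleC_left cinner_scaleC_right
    by (metis cinner_commute mult.commute)
  have idem: "Q \<circ> Q = Q"
    by (rule ext) (simp add: Q_def cinner_scaleC_right scaleC_scaleC zz)
  have z0: "z \<noteq> 0" using z by auto
  have indep: "\<not> module.dependent scaleC {z}"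
  proof
    assume "module.dependent scaleC {z}"
    then obtain t u where t: "finite t" "t \<subseteq> {z}" "(\<Sum>v\<in>t. u v *\<^sub>C v) = 0" "\<exists>v\<in>t. u v \<noteq> 0"
      unfolding module.dependent_explicit[OF module_scaleC] by blast
    then have "t = {z}" by auto
    with t have "u z *\<^sub>C z = 0" "u z \<noteq> 0" by auto
    then show False using scaleC_cancel_nonzero z0 by blast
  qed
  have span: "module.span scaleC {z} = range Q"
    unfolding module.span_singleton[OF module_scaleC]
  proof
    show "range (\<lambda>k. k *\<^sub>C z) \<subseteq> range Q" using Qz by (metis (mono_tags, lifting) image_subsetI rangeI)
    show "range Q \<subseteq> range (\<lambda>k. k *\<^sub>C z)" unfolding Q_def by auto
  qed
  have rank: "has_rank Q 1"
    unfolding has_rank_def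
    by (rule exI[of _ "{z}"]) (use indep span Qz[of 1] in \<open>auto simp: scaleC_one intro: range_eqI[where x=z]\<close>)
  have eq: "(\<lambda>x. Q (A j (Q x))) = (\<lambda>x. complex_of_real ((\<chi> j. Re (cinner z (A j z))) $ j) *\<^sub>C Q x)" for j
  proof (rule ext)
    fix x
    have "Q (A j (Q x)) = (cinner z x * cinner z (A j z)) *\<^sub>C z"
      unfolding Q_def using A bcl_scale[of "A j"] by (simp add: cinner_scaleC_right)
    also have "\<dots> = (cinner z x * complex_of_real (Re (cinner z (A j z)))) *\<^sub>C z"
      using selfadj_real[of "A j" z] A by simp
    also have "\<dots> = complex_of_real ((\<chi> j. Re (cinner z (A j z))) $ j) *\<^sub>C Q x"
      unfolding Q_def by (simp add: scaleC_scaleC mult.commute)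
    finally show "Q (A j (Q x)) = complex_of_real ((\<chi> j. Re (cinner z (A j z))) $ j) *\<^sub>C Q x" .
  qed
  show ?thesis
    unfolding rank_k_nr_def orth_proj_def
    using bcl sa idem rank eq by blast
qed

lemma proj_inner:
  assumes "orth_proj P" "\<forall>j. (\<lambda>x. P (A j (P x))) = (\<lambda>x. complex_of_real (b $ j) *\<^sub>C P x)" "P y = y"
  shows "cinner y (A j y) = complex_of_real (b $ j) * cinner y y"
proof -
  have sa: "selfadjoint P" using assms(1) unfolding orth_proj_def by blast
  have "cinner y (A j y) = cinner (P y) (A j (P y))" using assms(3) by simp
  also have "\<dots> = cinner y (P (A j (P y)))" using sa unfolding selfadjoint_def by blast
  also have "\<dots> = cinner y (complex_of_real (b $ j) *\<^sub>C P y)" using assms(2) by metis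
  finally show ?thesis using assms(3) by (simp add: cinner_scaleC_right)
qed

lemma rank_basis:
  assumes "orth_proj P" "has_rank P k"
  obtains B where "finite B" "card B = k" "\<And>u. u \<in> B \<Longrightarrow> P u = u"
     "\<not> module.dependent scaleC B"
proof -
  obtain B where B: "finite B" "card B = k" "B \<subseteq> range P" "\<not> module.dependent scaleC B"
    using assms(2) unfolding has_rank_def by blast
  have "P u = u" if uB: "u \<in> B" for u
  proof -
    obtain w where "u = P w" using B(3) uB by blast
    then show ?thesis using assms(1) unfolding orth_proj_def by (metis comp_apply)
  qed
  then show ?thesis using that B by blast
qed

lemma unit_in_range:
  assumes "orth_proj P" "has_rank P k" "k \<ge> 1"
  obtains y :: "'a::complex_inner" where "norm y = 1" "P y = y"
proof -
  obtain B where B: "finite B" "card B = k" "\<And>u. u \<in> B \<Longrightarrow> P u = u" "\<not> module.dependent scaleC B"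
    using rank_basis[OF assms(1,2)] by blast
  obtain u where u: "u \<in> B" using B(1,2) assms(3) by fastforce
  have u0: "u \<noteq> 0" using module.dependent_zero[OF module_scaleC] B(4) u by blast
  define y where "y = complex_of_real (1 / norm u) *\<^sub>C u"
  have "norm y = 1" unfolding y_def norm_scaleC using u0 by (simp add: norm_divide)
  moreover have "P y = y" unfolding y_def using assms(1) B(3)[OF u] unfolding orth_proj_def
    by (simp add: bcl_scale)
  ultimately show ?thesis using that by blast
qed


lemma dep_family:
  fixes g :: "'i \<Rightarrow> 'v::euclidean_space"
  assumes fin: "finite I" and card: "card I > DIM('v)"
  shows "\<exists>r. (\<Sum>i\<in>I. r i *\<^sub>R g i) = 0 \<and> (\<exists>i\<in>I. r i \<noteq> 0)"
proof (cases "inj_on g I")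
  case True
  have "dependent (g ` I)"
    by (rule dependent_biggerset) (use True card in \<open>simp add: card_image\<close>)
  then obtain t u where t: "finite t" "t \<subseteq> g ` I" "(\<Sum>v\<in>t. u v *\<^sub>R v) = 0" "\<exists>v\<in>t. u v \<noteq> 0"
    unfolding dependent_explicit by blast
  define r where "r i = (if g i \<in> t then u (g i) else 0)" for i
  define J where "J = {i\<in>I. g i \<in> t}"
  have gJ: "g ` J = t" using t(2) J_def by auto
  have injJ: "inj_on g J" using True J_def inj_on_subset by fastforce
  have "(\<Sum>i\<in>I. r i *\<^sub>R g i) = (\<Sum>i\<in>J. u (g i) *\<^sub>R g i)"
    by (rule sum.mono_neutral_cong_right) (auto simp: r_def J_def fin)
  also have "\<dots> = (\<Sum>v\<in>t. u v *\<^sub>R v)"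
    using sum.reindex[OF injJ, of "\<lambda>v. u v *\<^sub>R v"] gJ by simp
  finally have "(\<Sum>i\<in>I. r i *\<^sub>R g i) = 0" using t(3) by simp
  moreover have "\<exists>i\<in>I. r i \<noteq> 0"
  proof -
    obtain v where v: "v \<in> t" "u v \<noteq> 0" using t(4) by blast
    then obtain i where "i \<in> I" "g i = v" using t(2) by blast
    then show ?thesis using v by (intro bexI[of _ i]) (auto simp: r_def)
  qed
  ultimately show ?thesis by blast
next
  case False
  then obtain i i' where ii: "i \<in> I" "i' \<in> I" "i \<noteq> i'" "g i = g i'"
    unfolding inj_on_def by blast
  define r where "r l = (if l = i then 1 else if l = i' then -1 else (0::real))" for l
  have "(\<Sum>l\<in>I. r l *\<^sub>R g l) = (\<Sum>l\<in>{i,i'}. r l *\<^sub>R g l)"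
    by (rule sum.mono_neutral_cong_right) (use ii fin in \<open>auto simp: r_def\<close>)
  also have "\<dots> = 0" using ii by (simp add: r_def)
  finally show ?thesis using ii by (intro exI[of _ r]) (auto simp: r_def)
qed

lemma bcl_zero: "bounded_clinear f \<Longrightarrow> f 0 = 0"
  by (metis add_cancel_right_right add_0 bcl_add)

lemma bcl_sum: "bounded_clinear f \<Longrightarrow> f (sum h S) = (\<Sum>s\<in>S. f (h s))"
proof (induction S rule: infinite_finite_induct)
  case (infinite S) then show ?case by (simp add: bcl_zero)
next
  case empty then show ?case by (simp add: bcl_zero)
next
  case (insert x F) then show ?case by (simp add: bcl_add)
qed

lemma cinner_sum_right: "cinner w (sum h S) = (\<Sum>s\<in>S. cinner (w::'a::complex_inner) (h s))"
proof (induction S rule: infinite_finite_induct)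
  case (insert x F) then show ?case by (simp add: cinner_add_right)
qed auto


lemma exists_y:
  fixes A :: "'m::finite \<Rightarrow> 'a::complex_inner \<Rightarrow> 'a"
  assumes P: "orth_proj P" "has_rank P k" and k: "2*k > CARD('m) + 1"
  shows "\<exists>y. norm y = 1 \<and> P y = y \<and> (\<forall>j. Re (cinner (A j x) y) = 0) \<and> Re (cinner x y) = 0"
proof -
  obtain B where B: "finite B" "card B = k" "\<And>u. u \<in> B \<Longrightarrow> P u = u" "\<not> module.dependent scaleC B"
    using rank_basis[OF P] by blast
  define I where "I = B \<times> (UNIV::bool set)"
  define f :: "'a \<Rightarrow> 'a \<Rightarrow> bool \<Rightarrow> real"
    where "f w u b = (if b then - Im (cinner w u) else Re (cinner w u))" for w u b
  define g :: "'a \<times> bool \<Rightarrow> (real^'m) \<times> real"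
    where "g i = ((\<chi> j. f (A j x) (fst i) (snd i)), f x (fst i) (snd i))" for i
  have finI: "finite I" using B(1) by (simp add: I_def)
  have cardI: "card I > DIM((real^'m) \<times> real)"
    using k B(2) by (simp add: I_def card_cartesian_product)
  obtain r where r: "(\<Sum>i\<in>I. r i *\<^sub>R g i) = 0" "\<exists>i\<in>I. r i \<noteq> 0"
    using dep_family[OF finI cardI, of g] by blast
  define c where "c u = Complex (r (u,False)) (r (u,True))" for u
  define y where "y = (\<Sum>u\<in>B. c u *\<^sub>C u)"
  have key: "Re (cinner w y) = (\<Sum>i\<in>I. r i * f w (fst i) (snd i))" for w
  proof -
    have "Re (cinner w y) = (\<Sum>u\<in>B. Re (c u * cinner w u))"
      unfolding y_def cinner_sum_right cinner_scaleC_right Re_sum ..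
    also have "\<dots> = (\<Sum>u\<in>B. \<Sum>b\<in>UNIV. r (u,b) * f w u b)"
      by (rule sum.cong) (simp_all add: c_def f_def UNIV_bool)
    also have "\<dots> = (\<Sum>i\<in>I. r i * f w (fst i) (snd i))"
      unfolding I_def sum.cartesian_product by (simp add: case_prod_beta')
    finally show ?thesis .
  qed
  have c1: "Re (cinner (A j x) y) = 0" for j
  proof -
    have "fst (\<Sum>i\<in>I. r i *\<^sub>R g i) $ j = 0" using r(1) by simp
    then show ?thesis unfolding key fst_sum sum_component by (simp add: g_def)
  qed
  have c2: "Re (cinner x y) = 0"
  proof -
    have "snd (\<Sum>i\<in>I. r i *\<^sub>R g i) = 0" using r(1) by simp
    then show ?thesis unfolding key snd_sum by (simp add: g_def)
  qed
  have y0: "y \<noteq> 0"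
  proof
    assume "y = 0"
    then have "c u = 0" if "u \<in> B" for u
      using module.independentD[OF module_scaleC B(4) B(1) order_refl, of c u] that y_def by simp
    then have "r i = 0" if "i \<in> I" for i
      using that unfolding I_def c_def by (cases i; cases "snd i") (auto simp: complex_eq_iff)
    then show False using r(2) by blast
  qed
  have Py: "P y = y"
    unfolding y_def using P(1) B(3) unfolding orth_proj_def by (simp add: bcl_sum bcl_scale)
  define y' where "y' = complex_of_real (1 / norm y) *\<^sub>C y"
  have "norm y' = 1" unfolding y'_def norm_scaleC using y0 by (simp add: norm_divide)
  moreover have "P y' = y'" unfolding y'_def using P(1) Py unfolding orth_proj_def by (simp add: bcl_scale)
  moreover have "Re (cinner (A j x) y') = 0" for j unfolding y'_def cinner_scaleC_right using c1[of j] by simp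
  moreover have "Re (cinner x y') = 0" unfolding y'_def cinner_scaleC_right using c2 by simp
  ultimately show ?thesis by blast
qed


lemma expand_quad:
  fixes x y :: "'a::complex_inner"
  assumes B: "bounded_clinear B"
  shows "cinner (complex_of_real a *\<^sub>C y + complex_of_real b *\<^sub>C x)
                (B (complex_of_real a *\<^sub>C y + complex_of_real b *\<^sub>C x))
       = complex_of_real (a*a) * cinner y (B y) + complex_of_real (b*b) * cinner x (B x)
         + complex_of_real (a*b) * (cinner y (B x) + cinner x (B y))"
  using B by (simp add: bcl_add bcl_scale cinner_add_left cinner_add_right cinner_scaleC_left
      cinner_scaleC_right algebra_simps)

lemma cross_zero:
  assumes "selfadjoint B" "Re (cinner (B x) y) = 0"
  shows "cinner y (B x) + cinner x (B y) = 0"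
proof -
  have "cinner x (B y) = cinner (B x) y" using assms(1) unfolding selfadjoint_def by simp
  moreover have "cinner y (B x) = cnj (cinner (B x) y)" by (rule cinner_commute)
  ultimately show ?thesis using assms(2) by (simp add: complex_eq_iff)
qed

lemma bcl_id: "bounded_clinear (\<lambda>x::'a::complex_inner. x)"
  unfolding bounded_clinear_def by (intro conjI allI exI[of _ 1]) auto

lemma sa_id: "selfadjoint (\<lambda>x::'a::complex_inner. x)"
  unfolding selfadjoint_def by simp

lemma segment_in:
  fixes A :: "'m::finite \<Rightarrow> 'a::complex_inner \<Rightarrow> 'a"
  assumes A: "\<forall>j. bounded_clinear (A j) \<and> selfadjoint (A j)"
    and c: "c \<in> rank_k_nr k A" and k: "2*k > CARD('m)+1"
    and b: "b \<in> rank_k_nr 1 A"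
  shows "closed_segment c b \<subseteq> rank_k_nr 1 A"
proof
  fix p assume "p \<in> closed_segment c b"
  then obtain u where u: "0 \<le> u" "u \<le> 1" "p = (1 - u) *\<^sub>R c + u *\<^sub>R b"
    unfolding closed_segment_def by blast
  obtain P where P: "orth_proj P" "has_rank P k"
      "\<forall>j. (\<lambda>x. P (A j (P x))) = (\<lambda>x. complex_of_real (c $ j) *\<^sub>C P x)"
    using c unfolding rank_k_nr_def by blast
  obtain Q where Q: "orth_proj Q" "has_rank Q 1"
      "\<forall>j. (\<lambda>x. Q (A j (Q x))) = (\<lambda>x. complex_of_real (b $ j) *\<^sub>C Q x)"
    using b unfolding rank_k_nr_def by blast
  obtain x where x: "norm x = 1" "Q x = x" using unit_in_range[OF Q(1,2)] by auto
  have xx: "cinner x x = 1" using x(1) cinner_self_real[of x] by simp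
  have bx: "cinner x (A j x) = complex_of_real (b $ j)" for j
    using proj_inner[OF Q(1) Q(3) x(2), of j] xx by simp
  obtain y where y: "norm y = 1" "P y = y" "\<forall>j. Re (cinner (A j x) y) = 0" "Re (cinner x y) = 0"
    using exists_y[OF P(1,2) k, of A x] by blast
  have yy: "cinner y y = 1" using y(1) cinner_self_real[of y] by simp
  have cy: "cinner y (A j y) = complex_of_real (c $ j)" for j
    using proj_inner[OF P(1) P(3) y(2), of j] yy by simp
  define \<alpha> where "\<alpha> = sqrt (1 - u)"
  define \<beta> where "\<beta> = sqrt u"
  have aa: "\<alpha> * \<alpha> = 1 - u" unfolding \<alpha>_def using u by simp
  have bb: "\<beta> * \<beta> = u" unfolding \<beta>_def using u by simp
  define z where "z = complex_of_real \<alpha> *\<^sub>C y + complex_of_real \<beta> *\<^sub>C x"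
  have "cinner z z = complex_of_real (1 - u) * 1 + complex_of_real u * 1"
    using expand_quad[OF bcl_id, of \<alpha> y \<beta> x] cross_zero[OF sa_id, of x y] y(4) xx yy aa bb
    unfolding z_def by simp
  then have "cinner z z = 1" by (simp add: algebra_simps)
  then have "(norm z)^2 = 1" using cinner_self_real[of z] by (metis of_real_eq_1_iff)
  then have "norm z = 1 \<or> norm z = -1" by (simp add: power2_eq_1_iff)
  then have nz: "norm z = 1" using norm_ge_zero[of z] by linarith
  have "cinner z (A j z) = complex_of_real ((1 - u) * c $ j + u * b $ j)" for j
  proof -
    have "cinner z (A j z) = complex_of_real (1 - u) * complex_of_real (c $ j) + complex_of_real u * complex_of_real (b $ j)"
      using expand_quad[of "A j" \<alpha> y \<beta> x] cross_zero[of "A j" x y] A y(3) cy bx aa bb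
      unfolding z_def by simp
    then show ?thesis by simp
  qed
  then have "(\<chi> j. Re (cinner z (A j z))) = p" using u(3) by (simp add: vec_eq_iff)
  then show "p \<in> rank_k_nr 1 A" using in_nr1[OF nz A] by simp
qed

lemma center_in:
  fixes A :: "'m::finite \<Rightarrow> 'a::complex_inner \<Rightarrow> 'a"
  assumes A: "\<forall>j. bounded_clinear (A j) \<and> selfadjoint (A j)"
    and c: "c \<in> rank_k_nr k A" and k: "2*k > CARD('m)+1"
  shows "c \<in> rank_k_nr 1 A"
proof -
  obtain P where P: "orth_proj P" "has_rank P k"
      "\<forall>j. (\<lambda>x. P (A j (P x))) = (\<lambda>x. complex_of_real (c $ j) *\<^sub>C P x)"
    using c unfolding rank_k_nr_def by blast
  have "k \<ge> 1" using k by simp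
  then obtain y where y: "norm y = 1" "P y = y" using unit_in_range[OF P(1,2)] by auto
  have yy: "cinner y y = 1" using y(1) cinner_self_real[of y] by simp
  have cy: "cinner y (A j y) = complex_of_real (c $ j)" for j
    using proj_inner[OF P(1) P(3) y(2), of j] yy by simp
  have "(\<chi> j. Re (cinner y (A j y))) = c" using cy by (simp add: vec_eq_iff)
  then show ?thesis using in_nr1[OF y(1) A] by simp
qed


lemma kernel_convex: "convex {c. star_center c (S::'v::real_vector set)}"
  unfolding convex_def
proof (intro ballI allI impI, clarsimp)
  fix c1 c2 and u v :: real
  assume c1: "star_center c1 S" and c2: "star_center c2 S" and uv: "0 \<le> u" "0 \<le> v" "u + v = 1"
  define c where "c = u *\<^sub>R c1 + v *\<^sub>R c2"
  have c1S: "c1 \<in> S" and c2S: "c2 \<in> S" using c1 c2 unfolding star_center_def by auto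
  have cS: "c \<in> S"
  proof -
    have "c \<in> closed_segment c1 c2"
      unfolding closed_segment_def c_def using uv by (intro CollectI exI[of _ v]) (auto simp: eq_diff_eq[symmetric])
    then show ?thesis using c1 c2S unfolding star_center_def by blast
  qed
  have "closed_segment c b \<subseteq> S" if bS: "b \<in> S" for b
  proof
    fix p assume "p \<in> closed_segment c b"
    then obtain t where t: "0 \<le> t" "t \<le> 1" "p = (1 - t) *\<^sub>R c + t *\<^sub>R b"
      unfolding closed_segment_def by blast
    define s where "s = 1 - (1 - t) * u"
    show "p \<in> S"
    proof (cases "s = 0")
      case True
      then have "(1 - t) * u = 1" unfolding s_def by simp
      moreover have "(1 - t) * u \<le> u" using mult_right_mono[of "1 - t" 1 u] t uv by simp
      moreover have "(1 - t) * u \<le> 1 - t" using mult_left_mono[of u 1 "1 - t"] t uv by simp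
      ultimately have "t = 0" "u = 1" using t uv by linarith+
      then show ?thesis using t uv c1S by (simp add: c_def)
    next
      case False
      have "s - t = (1 - t) * (1 - u)" unfolding s_def by (simp add: algebra_simps)
      moreover have "(1 - t) * (1 - u) \<ge> 0" using t uv by simp
      ultimately have s_ge: "s \<ge> t" by linarith
      have "(1 - t) * u \<ge> 0" using t uv by simp
      then have s_le: "s \<le> 1" unfolding s_def by linarith
      have s_pos: "s > 0" using False s_ge t by linarith
      define q where "q = ((1 - t) * v / s) *\<^sub>R c2 + (t / s) *\<^sub>R b"
      have "q \<in> closed_segment c2 b"
        unfolding closed_segment_def q_def
      proof (intro CollectI exI[of _ "t / s"] conjI)
        show "0 \<le> t / s" using t s_pos by simp
        show "t / s \<le> 1" using s_ge s_pos by simp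
        have v1: "v = 1 - u" using uv by simp
        have "1 - t / s = (1 - t) * v / s" using s_pos unfolding s_def v1 by (simp add: field_simps)
        then show "((1 - t) * v / s) *\<^sub>R c2 + (t / s) *\<^sub>R b = (1 - t / s) *\<^sub>R c2 + (t / s) *\<^sub>R b" by simp
      qed
      then have qS: "q \<in> S" using c2 bS unfolding star_center_def by blast
      have sq: "s *\<^sub>R q = ((1 - t) * v) *\<^sub>R c2 + t *\<^sub>R b"
        unfolding q_def using s_pos by (simp add: scaleR_add_right)
      have "(1 - s) *\<^sub>R c1 + s *\<^sub>R q = ((1 - t) * u) *\<^sub>R c1 + ((1 - t) * v) *\<^sub>R c2 + t *\<^sub>R b"
        unfolding sq by (simp add: s_def)
      also have "\<dots> = p" unfolding t(3) c_def by (simp add: algebra_simps)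
      finally have "p = (1 - s) *\<^sub>R c1 + s *\<^sub>R q" by simp
      then have "p \<in> closed_segment c1 q"
        unfolding closed_segment_def using s_pos s_le by (intro CollectI exI[of _ s]) simp
      then show ?thesis using c1 qS unfolding star_center_def by blast
    qed
  qed
  then show "star_center (u *\<^sub>R c1 + v *\<^sub>R c2) S" using cS unfolding star_center_def c_def by blast
qed


theorem theorem3p6:
  fixes A :: "'m::finite \<Rightarrow> 'a::chilbert_space \<Rightarrow> 'a" and khat :: nat
  assumes "\<forall>j. bounded_clinear (A j) \<and> selfadjoint (A j)"
    and "real khat > (real CARD('m) + 1) / 2"
    and "rank_k_nr khat A \<noteq> {}"
  shows "star_shaped (rank_k_nr 1 A) \<and>
         convex hull (rank_k_nr khat A) \<subseteq> rank_k_nr 1 A \<and>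
         (\<forall>c \<in> convex hull (rank_k_nr khat A). star_center c (rank_k_nr 1 A))"
proof -
  have "real (CARD('m) + 1) < real (2 * khat)" using assms(2) by simp
  then have k: "2 * khat > CARD('m) + 1" by (simp only: of_nat_less_iff)
  define K where "K = {c. star_center c (rank_k_nr 1 A)}"
  have sub: "rank_k_nr khat A \<subseteq> K"
  proof
    fix c assume c: "c \<in> rank_k_nr khat A"
    show "c \<in> K" unfolding K_def star_center_def
      using center_in[OF assms(1) c k] segment_in[OF assms(1) c k] by blast
  qed
  have hull: "convex hull (rank_k_nr khat A) \<subseteq> K"
    by (rule hull_minimal[OF sub]) (simp add: K_def kernel_convex)
  obtain c0 where "c0 \<in> rank_k_nr khat A" using assms(3) by blast
  then have "star_shaped (rank_k_nr 1 A)" using sub unfolding star_shaped_def K_def by blast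
  moreover have "convex hull (rank_k_nr khat A) \<subseteq> rank_k_nr 1 A"
    using hull unfolding K_def star_center_def by blast
  ultimately show ?thesis using hull unfolding K_def by blast
qed

end
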